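(* In the matching game defined by a market $\mathbf{M}=(\mathbf{P},\mathbf{A},\mathbf{O})$, for every pure-strategy Nash equilibrium $a$ the match $\mu(a)$ is stable, and every stable match equals $\mu(a)$ for some pure-strategy Nash equilibrium $a$. Moreover, any action profile $a$ with $\mu(a)=\mu^*$ (the proposer-optimal stable match) is a pure Nash equilibrium that maximizes the welfare $\sum_{i=1}^n u_i(a)$ among all pure Nash equilibria.
   Context: Market: proposers $\mathbf{P}=\{P_1,\dots,P_n\}$ and disjoint acceptors $\mathbf{A}=\{A_1,\dots,A_m\}$. Each proposer $P_i$ has an injective function $O_{P_i}:\mathbf{A}\cup\{\emptyset\}\to[0,1]$ with $O_{P_i}(A_j)>O_{P_i}(\emptyset)=0$; each acceptor $A_j$ has an injective $O_{A_j}:\mathbf{P}\cup\{\emptyset\}\to[0,1]$ with $O_{A_j}(P_i)>O_{A_j}(\emptyset)=0$. Game: the players are the proposers; each $P_i$ chooses $a_i\in\mathbf{A}\cup\{\emptyset\}$. Each acceptor $A_j$ accepts its $O_{A_j}$-most preferred proposer among $\{P_i:a_i=A_j\}$ (if nonempty), rejecting the others, giving a match $\mu(a)$ with $\mu_{P_i}(a)$ the acceptor that accepted $P_i$ (or $\emptyset$) and $\mu_{A_j}(a)$ the proposer accepted by $A_j$ (or $\emptyset$). Utility $u_i(a)=O_{P_i}(\mu_{P_i}(a))$. A match $\mu$ is unstable if some pair $(P_i,A_j)$ has $O_{P_i}(A_j)>O_{P_i}(\mu_{P_i})$ and $O_{A_j}(P_i)>O_{A_j}(\mu_{A_j})$,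 and stable otherwise. The proposer-optimal stable match $\mu^*$ is the stable match such that $O_{P_i}(\mu^*_{P_i})\ge O_{P_i}(\mu'_{P_i})$ for every stable $\mu'$ and every $i$. *)

theory Defs
  imports Complex_Main
begin

text \<open>The acceptor-or-nothing value A_j / \<emptyset> is encoded as 'a option (None = \<emptyset>),
  likewise proposer-or-nothing as 'p option.\<close>

definition market ::
  "'p set \<Rightarrow> 'a set \<Rightarrow> ('p \<Rightarrow> 'a option \<Rightarrow> real) \<Rightarrow> ('a \<Rightarrow> 'p option \<Rightarrow> real) \<Rightarrow> bool" where
  "market P A OP OA \<longleftrightarrow> finite P \<and> finite A \<and>
     (\<forall>p\<in>P. inj_on (OP p) (insert None (Some ` A)) \<and> OP p None = 0 \<and>
        (\<forall>a\<in>A. 0 < OP p (Some a) \<and> OP p (Some a) \<le> 1)) \<and>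
     (\<forall>a\<in>A. inj_on (OA a) (insert None (Some ` P)) \<and> OA a None = 0 \<and>
        (\<forall>p\<in>P. 0 < OA a (Some p) \<and> OA a (Some p) \<le> 1))"

text \<open>Action profiles: functions 'p \<Rightarrow> 'a option; only values on P matter.\<close>
definition valid_profile :: "'p set \<Rightarrow> 'a set \<Rightarrow> ('p \<Rightarrow> 'a option) \<Rightarrow> bool" where
  "valid_profile P A act \<longleftrightarrow> (\<forall>p\<in>P. act p \<in> insert None (Some ` A))"

definition mu :: "'p set \<Rightarrow> ('a \<Rightarrow> 'p option \<Rightarrow> real) \<Rightarrow> ('p \<Rightarrow> 'a option) \<Rightarrow> 'p \<Rightarrow> 'a option" where
  "mu P OA act p =
     (case act p of
        None \<Rightarrow> None
      | Some a \<Rightarrow> (if p \<in> P \<and> (\<forall>q\<in>P. act q = Some a \<and> q \<noteq> p \<longrightarrow> OA a (Some q) < OA a (Some p))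
                  then Some a else None))"

definition utility ::
  "'p set \<Rightarrow> ('p \<Rightarrow> 'a option \<Rightarrow> real) \<Rightarrow> ('a \<Rightarrow> 'p option \<Rightarrow> real) \<Rightarrow> ('p \<Rightarrow> 'a option) \<Rightarrow> 'p \<Rightarrow> real" where
  "utility P OP OA act p = OP p (mu P OA act p)"

definition welfare ::
  "'p set \<Rightarrow> ('p \<Rightarrow> 'a option \<Rightarrow> real) \<Rightarrow> ('a \<Rightarrow> 'p option \<Rightarrow> real) \<Rightarrow> ('p \<Rightarrow> 'a option) \<Rightarrow> real" where
  "welfare P OP OA act = (\<Sum>p\<in>P. utility P OP OA act p)"

definition pure_nash ::
  "'p set \<Rightarrow> 'a set \<Rightarrow> ('p \<Rightarrow> 'a option \<Rightarrow> real) \<Rightarrow> ('a \<Rightarrow> 'p option \<Rightarrow> real) \<Rightarrow> ('p \<Rightarrow> 'a option) \<Rightarrow> bool" where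
  "pure_nash P A OP OA act \<longleftrightarrow> valid_profile P A act \<and>
     (\<forall>p\<in>P. \<forall>x\<in>insert None (Some ` A).
        utility P OP OA (act(p := x)) p \<le> utility P OP OA act p)"

text \<open>A match, represented by its proposer side M :: 'p \<Rightarrow> 'a option (None outside P);
  distinct proposers get distinct acceptors.\<close>
definition is_match :: "'p set \<Rightarrow> 'a set \<Rightarrow> ('p \<Rightarrow> 'a option) \<Rightarrow> bool" where
  "is_match P A M \<longleftrightarrow> (\<forall>p. p \<notin> P \<longrightarrow> M p = None) \<and>
     (\<forall>p\<in>P. M p \<in> insert None (Some ` A)) \<and>
     (\<forall>p\<in>P. \<forall>q\<in>P. M p \<noteq> None \<and> M p = M q \<longrightarrow> p = q)"

definition partner :: "'p set \<Rightarrow> ('p \<Rightarrow> 'a option) \<Rightarrow> 'a \<Rightarrow> 'p option" where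
  "partner P M a = (if \<exists>p\<in>P. M p = Some a then Some (THE p. p \<in> P \<and> M p = Some a) else None)"

definition stable ::
  "'p set \<Rightarrow> 'a set \<Rightarrow> ('p \<Rightarrow> 'a option \<Rightarrow> real) \<Rightarrow> ('a \<Rightarrow> 'p option \<Rightarrow> real) \<Rightarrow> ('p \<Rightarrow> 'a option) \<Rightarrow> bool" where
  "stable P A OP OA M \<longleftrightarrow> is_match P A M \<and>
     \<not> (\<exists>p\<in>P. \<exists>a\<in>A. OP p (Some a) > OP p (M p) \<and> OA a (Some p) > OA a (partner P M a))"

definition proposer_optimal_stable ::
  "'p set \<Rightarrow> 'a set \<Rightarrow> ('p \<Rightarrow> 'a option \<Rightarrow> real) \<Rightarrow> ('a \<Rightarrow> 'p option \<Rightarrow> real) \<Rightarrow> ('p \<Rightarrow> 'a option) \<Rightarrow> bool" where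
  "proposer_optimal_stable P A OP OA M \<longleftrightarrow> stable P A OP OA M \<and>
     (\<forall>M'. stable P A OP OA M' \<longrightarrow> (\<forall>p\<in>P. OP p (M p) \<ge> OP p (M' p)))"

end

theory Submission
  imports Defs
begin

lemma mu_match:
  assumes "market P A OP OA" "valid_profile P A act"
  shows "is_match P A (mu P OA act)"
  unfolding is_match_def
proof (intro conjI ballI allI impI)
  fix p assume "p \<notin> P" thus "mu P OA act p = None" by (auto simp: mu_def split: option.splits)
next
  fix p assume "p \<in> P"
  thus "mu P OA act p \<in> insert None (Some ` A)" using assms(2)
    by (auto simp: mu_def valid_profile_def split: option.splits)
next
  fix p q assume pq: "p \<in> P" "q \<in> P" "mu P OA act p \<noteq> None \<and> mu P OA act p = mu P OA act q"
  obtain a where a1: "mu P OA act p = Some a" using pq(3) by (metis option.exhaust)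
  have a: "mu P OA act p = Some a" "mu P OA act q = Some a" using a1 pq(3) by auto
  have "act p = Some a" "act q = Some a" using a by (auto simp: mu_def split: option.splits if_splits)
  show "p = q"
  proof (rule ccontr)
    assume "p \<noteq> q"
    hence "OA a (Some q) < OA a (Some p)" "OA a (Some p) < OA a (Some q)"
      using a pq \<open>act p = Some a\<close> \<open>act q = Some a\<close>
      by (auto simp: mu_def split: if_splits)
    thus False by simp
  qed
qed

lemma partner_eq:
  assumes "is_match P A M" "p \<in> P" "M p = Some a"
  shows "partner P M a = Some p"
proof -
  have "(THE q. q \<in> P \<and> M q = Some a) = p"
    using assms unfolding is_match_def by (intro the_equality) auto
  thus ?thesis using assms unfolding partner_def by auto
qed

lemma partner_None:
  assumes "\<not> (\<exists>p\<in>P. M p = Some a)"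
  shows "partner P M a = None"
  using assms unfolding partner_def by auto

lemma accept:
  assumes mk: "market P A OP OA" and v: "valid_profile P A act" and p: "p \<in> P" and a: "a \<in> A"
    and gt: "OA a (Some p) > OA a (partner P (mu P OA act) a)"
  shows "mu P OA (act(p := Some a)) p = Some a"
proof -
  have inj: "inj_on (OA a) (insert None (Some ` P))" and fin: "finite P"
    using mk a unfolding market_def by auto
  have "OA a (Some q) < OA a (Some p)" if q: "q \<in> P" "act q = Some a" "q \<noteq> p" for q
  proof -
    define S where "S = {q\<in>P. act q = Some a}"
    have Sf: "finite S" using fin S_def by auto
    have Sne: "q \<in> S" using q S_def by auto
    have "finite ((\<lambda>x. OA a (Some x)) ` S)" "(\<lambda>x. OA a (Some x)) ` S \<noteq> {}" using Sf Sne by auto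
    then have "Max ((\<lambda>x. OA a (Some x)) ` S) \<in> (\<lambda>x. OA a (Some x)) ` S" by (rule Max_in)
    then obtain m where m: "m \<in> S" "OA a (Some m) = Max ((\<lambda>x. OA a (Some x)) ` S)" by auto
    have mle: "OA a (Some x) \<le> OA a (Some m)" if "x \<in> S" for x
      using m that Sf by auto
    have mP: "m \<in> P" "act m = Some a" using m S_def by auto
    have "mu P OA act m = Some a"
    proof -
      have "OA a (Some x) < OA a (Some m)" if "x \<in> P" "act x = Some a" "x \<noteq> m" for x
      proof -
        have "OA a (Some x) \<le> OA a (Some m)" using mle that S_def by auto
        moreover have "OA a (Some x) \<noteq> OA a (Some m)"
          using inj_onD[OF inj, of "Some x" "Some m"] that mP by auto
        ultimately show ?thesis by simp
      qed
      thus ?thesis using mP unfolding mu_def by auto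
    qed
    hence "partner P (mu P OA act) a = Some m"
      using partner_eq[OF mu_match[OF mk v] mP(1)] by simp
    hence "OA a (Some m) < OA a (Some p)" using gt by simp
    moreover have "OA a (Some q) \<le> OA a (Some m)" using mle Sne by auto
    ultimately show ?thesis by simp
  qed
  hence "\<forall>q\<in>P. (act(p := Some a)) q = Some a \<and> q \<noteq> p \<longrightarrow> OA a (Some q) < OA a (Some p)"
    by simp
  moreover have "mu P OA (act(p := Some a)) p = (if p \<in> P \<and> (\<forall>q\<in>P. (act(p := Some a)) q = Some a \<and> q \<noteq> p \<longrightarrow> OA a (Some q) < OA a (Some p)) then Some a else None)"
    unfolding mu_def by (simp only: fun_upd_same option.case)
  ultimately show ?thesis using p by presburger
qed

lemma stable_nash:
  assumes mk: "market P A OP OA" and v: "valid_profile P A act"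
    and st: "stable P A OP OA (mu P OA act)"
  shows "pure_nash P A OP OA act"
  unfolding pure_nash_def
proof (intro conjI ballI v)
  fix p x assume p: "p \<in> P" and x: "x \<in> insert None (Some ` A)"
  have mem: "mu P OA act p \<in> insert None (Some ` A)"
    using mu_match[OF mk v] p unfolding is_match_def by blast
  have nn: "0 \<le> OP p (mu P OA act p)"
  proof (cases "mu P OA act p")
    case None thus ?thesis using mk p unfolding market_def by auto
  next
    case (Some b) hence "b \<in> A" using mem by auto
    thus ?thesis using Some mk p unfolding market_def by force
  qed
  show "utility P OP OA (act(p := x)) p \<le> utility P OP OA act p"
  proof (cases "mu P OA (act(p := x)) p")
    case None
    then show ?thesis using nn p mk unfolding utility_def market_def by auto
  next
    case (Some a)
    hence xa: "x = Some a" by (auto simp: mu_def split: option.splits if_splits)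
    hence aA: "a \<in> A" using x by auto
    show ?thesis
    proof (cases "OA a (Some p) > OA a (partner P (mu P OA act) a)")
      case True
      hence "\<not> OP p (Some a) > OP p (mu P OA act p)" using st p aA unfolding stable_def by auto
      thus ?thesis using Some unfolding utility_def by auto
    next
      case False
      have "\<exists>q\<in>P. mu P OA act q = Some a"
      proof (rule ccontr)
        assume "\<not> ?thesis"
        hence "partner P (mu P OA act) a = None" by (rule partner_None)
        moreover have "OA a None = 0" "0 < OA a (Some p)" using mk p aA unfolding market_def by auto
        ultimately show False using False by simp
      qed
      then obtain q where q: "q \<in> P" "mu P OA act q = Some a" by auto
      hence pa: "partner P (mu P OA act) a = Some q" using partner_eq[OF mu_match[OF mk v]] by auto
      show ?thesis
      proof (cases "q = p")
        case True thus ?thesis using q Some unfolding utility_def by auto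
      next
        case False
        have "act q = Some a" using q by (auto simp: mu_def split: option.splits if_splits)
        hence "OA a (Some q) < OA a (Some p)" using Some xa False q
          by (auto simp: mu_def split: if_splits)
        thus ?thesis using pa \<open>\<not> _ < _\<close> by simp
      qed
    qed
  qed
qed

lemma nash_stable:
  assumes mk: "market P A OP OA" and n: "pure_nash P A OP OA act"
  shows "stable P A OP OA (mu P OA act)"
proof -
  have v: "valid_profile P A act" using n by (simp add: pure_nash_def)
  show ?thesis unfolding stable_def
  proof (intro conjI mu_match[OF mk v] notI)
    assume "\<exists>p\<in>P. \<exists>a\<in>A. OP p (mu P OA act p) < OP p (Some a) \<and>
             OA a (partner P (mu P OA act) a) < OA a (Some p)"
    then obtain p a where pa: "p \<in> P" "a \<in> A" "OP p (mu P OA act p) < OP p (Some a)"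
      "OA a (partner P (mu P OA act) a) < OA a (Some p)" by auto
    have "mu P OA (act(p := Some a)) p = Some a" using accept[OF mk v pa(1,2,4)] .
    moreover have "utility P OP OA (act(p := Some a)) p \<le> utility P OP OA act p"
      using n pa unfolding pure_nash_def by auto
    ultimately show False using pa(3) unfolding utility_def by simp
  qed
qed

lemma mu_self:
  assumes "is_match P A M"
  shows "mu P OA M = M"
proof
  fix p
  show "mu P OA M p = M p"
  proof (cases "M p")
    case None thus ?thesis by (simp add: mu_def)
  next
    case (Some a)
    hence "p \<in> P" using assms unfolding is_match_def by force
    moreover have "\<forall>q\<in>P. M q = Some a \<and> q \<noteq> p \<longrightarrow> OA a (Some q) < OA a (Some p)"
      using assms Some \<open>p \<in> P\<close> unfolding is_match_def by auto
    ultimately show ?thesis using Some by (simp add: mu_def)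
  qed
qed

theorem mainTheorem2:
  fixes P :: "'p set" and A :: "'a set"
    and OP :: "'p \<Rightarrow> 'a option \<Rightarrow> real" and OA :: "'a \<Rightarrow> 'p option \<Rightarrow> real"
  assumes "market P A OP OA"
  shows "(\<forall>act. pure_nash P A OP OA act \<longrightarrow> stable P A OP OA (mu P OA act))
       \<and> (\<forall>M. stable P A OP OA M \<longrightarrow> (\<exists>act. pure_nash P A OP OA act \<and> mu P OA act = M))
       \<and> (\<forall>Mstar act. proposer_optimal_stable P A OP OA Mstar \<and> valid_profile P A act
              \<and> mu P OA act = Mstar \<longrightarrow>
            pure_nash P A OP OA act \<and>
            (\<forall>b. pure_nash P A OP OA b \<longrightarrow> welfare P OP OA b \<le> welfare P OP OA act))"
proof (intro conjI allI impI)
  fix act assume "pure_nash P A OP OA act"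
  thus "stable P A OP OA (mu P OA act)" using nash_stable assms by blast
next
  fix M assume st: "stable P A OP OA M"
  hence m: "is_match P A M" unfolding stable_def by auto
  hence v: "valid_profile P A M" unfolding is_match_def valid_profile_def by auto
  have "mu P OA M = M" using mu_self[OF m] .
  thus "\<exists>act. pure_nash P A OP OA act \<and> mu P OA act = M"
    using stable_nash[OF assms v] st by metis
next
  fix Mstar act
  assume h: "proposer_optimal_stable P A OP OA Mstar \<and> valid_profile P A act \<and> mu P OA act = Mstar"
  thus "pure_nash P A OP OA act"
    using stable_nash[OF assms] unfolding proposer_optimal_stable_def by blast
  fix b assume "pure_nash P A OP OA b"
  hence "stable P A OP OA (mu P OA b)" using nash_stable assms by blast
  hence "\<forall>p\<in>P. OP p (mu P OA b p) \<le> OP p (mu P OA act p)"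
    using h unfolding proposer_optimal_stable_def by auto
  thus "welfare P OP OA b \<le> welfare P OP OA act"
    unfolding welfare_def utility_def by (intro sum_mono) auto
qed

end
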